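(* Let $(X,d)$ be a uniformly convex geodesic metric space. Then every closed convex pair $(A,B)$ of subsets of $X$ has proximal normal structure.
   Context: A geodesic space is one in which any two points are joined by a geodesic segment; a subset is convex if it contains every geodesic segment joining two of its points. A point $m$ is a midpoint of $x,y$ if $d(x,m)=d(m,y)=d(x,y)/2$. $X$ is uniformly convex if for every $r>0$ and $\varepsilon\in(0,2]$ there is $\delta\in(0,1]$ such that for all $a,x,y\in X$ with $d(x,a)\le r$, $d(y,a)\le r$, $d(x,y)\ge\varepsilon r$, one has $d(m,a)\le(1-\delta)r$ for any midpoint $m$ of $x,y$. Notation: $\operatorname{dist}(A,B)=\inf\{d(x,y):x\in A,y\in B\}$, $\delta(x,A)=\sup\{d(x,y):y\in A\}$, $\delta(A,B)=\sup\{d(x,y):x\in A,y\in B\}$. A pair $(H_1,H_2)$ is proximal if for every $(a,b)\in H_1\times H_2$ there is $(a',b')\in H_1\times H_2$ with $d(a,b')=d(a',b)=\operatorname{dist}(H_1,H_2)$. A convex pair $(K_1,K_2)$ has proximal normal structure if for every closed bounded convex proximal pair $(H_1,H_2)$ with $H_1\subseteq K_1$, $H_2\subseteq K_2$, $\operatorname{dist}(H_1,H_2)=\operatorname{dist}(K_1,K_2)$ and $\delta(H_1,H_2)>\operatorname{dist}(H_1,H_2)$, there exists $(x_1,x_2)\in H_1\times H_2$ with $\delta(x_1,H_2)<\delta(H_1,H_2)$ and $\delta(x_2,H_1)<\delta(H_1,H_2)$. *)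

theory Defs
  imports "HOL-Analysis.Analysis"
begin

definition geodesic_segment :: "'a::metric_space \<Rightarrow> 'a \<Rightarrow> 'a set \<Rightarrow> bool" where
  "geodesic_segment x y S \<longleftrightarrow>
     (\<exists>g :: real \<Rightarrow> 'a. g 0 = x \<and> g (dist x y) = y \<and>
        (\<forall>s\<in>{0..dist x y}. \<forall>t\<in>{0..dist x y}. dist (g s) (g t) = \<bar>s - t\<bar>) \<and>
        S = g ` {0..dist x y})"

definition geodesic_space :: "'a::metric_space itself \<Rightarrow> bool" where
  "geodesic_space _ \<longleftrightarrow> (\<forall>x y :: 'a. \<exists>S. geodesic_segment x y S)"

definition gconvex :: "'a::metric_space set \<Rightarrow> bool" where
  "gconvex A \<longleftrightarrow> (\<forall>x\<in>A. \<forall>y\<in>A. \<forall>S. geodesic_segment x y S \<longrightarrow> S \<subseteq> A)"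

definition is_midpoint :: "'a::metric_space \<Rightarrow> 'a \<Rightarrow> 'a \<Rightarrow> bool" where
  "is_midpoint x y m \<longleftrightarrow> dist x m = dist x y / 2 \<and> dist m y = dist x y / 2"

definition uniformly_convex :: "'a::metric_space itself \<Rightarrow> bool" where
  "uniformly_convex _ \<longleftrightarrow>
     (\<forall>r>0. \<forall>\<epsilon>. 0 < \<epsilon> \<and> \<epsilon> \<le> 2 \<longrightarrow>
        (\<exists>\<delta>. 0 < \<delta> \<and> \<delta> \<le> 1 \<and>
           (\<forall>a x y m :: 'a. dist x a \<le> r \<and> dist y a \<le> r \<and> dist x y \<ge> \<epsilon> * r
               \<and> is_midpoint x y m \<longrightarrow> dist m a \<le> (1 - \<delta>) * r)))"

definition dist_set :: "'a::metric_space set \<Rightarrow> 'a set \<Rightarrow> real" where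
  "dist_set A B = Inf {dist x y | x y. x \<in> A \<and> y \<in> B}"

definition diam_pt :: "'a::metric_space \<Rightarrow> 'a set \<Rightarrow> real" where
  "diam_pt x A = Sup {dist x y | y. y \<in> A}"

definition diam_sets :: "'a::metric_space set \<Rightarrow> 'a set \<Rightarrow> real" where
  "diam_sets A B = Sup {dist x y | x y. x \<in> A \<and> y \<in> B}"

definition proximal_pair :: "'a::metric_space set \<Rightarrow> 'a set \<Rightarrow> bool" where
  "proximal_pair H1 H2 \<longleftrightarrow>
     (\<forall>a\<in>H1. \<forall>b\<in>H2. \<exists>a'\<in>H1. \<exists>b'\<in>H2.
        dist a b' = dist_set H1 H2 \<and> dist a' b = dist_set H1 H2)"

definition proximal_normal_structure :: "'a::metric_space set \<Rightarrow> 'a set \<Rightarrow> bool" where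
  "proximal_normal_structure K1 K2 \<longleftrightarrow>
     (\<forall>H1 H2. H1 \<noteq> {} \<and> H2 \<noteq> {} \<and> closed H1 \<and> closed H2 \<and> bounded H1 \<and> bounded H2
        \<and> gconvex H1 \<and> gconvex H2 \<and> proximal_pair H1 H2
        \<and> H1 \<subseteq> K1 \<and> H2 \<subseteq> K2 \<and> dist_set H1 H2 = dist_set K1 K2
        \<and> diam_sets H1 H2 > dist_set H1 H2
        \<longrightarrow> (\<exists>x1\<in>H1. \<exists>x2\<in>H2. diam_pt x1 H2 < diam_sets H1 H2 \<and> diam_pt x2 H1 < diam_sets H1 H2))"

end

theory Submission
  imports Defs
begin

lemma bdd_pairs:
  fixes H K :: "'a::metric_space set"
  assumes "bounded H" "bounded K"
  shows "bdd_above {dist x y | x y. x \<in> H \<and> y \<in> K}"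
proof -
  obtain a e where e: "\<forall>x\<in>H. dist a x \<le> e" using assms(1) unfolding bounded_def by blast
  obtain b f where f: "\<forall>x\<in>K. dist b x \<le> f" using assms(2) unfolding bounded_def by blast
  have "dist x y \<le> e + f + dist a b" if "x \<in> H" "y \<in> K" for x y
  proof -
    have "dist x y \<le> dist x a + dist a b + dist b y"
      by (metis dist_triangle order_trans add_right_mono)
    also have "\<dots> \<le> e + dist a b + f" using e f that by (smt (verit) dist_commute)
    finally show ?thesis by simp
  qed
  then show ?thesis unfolding bdd_above_def by blast
qed

lemma bdd_pt:
  fixes K :: "'a::metric_space set"
  assumes "bounded K"
  shows "bdd_above {dist m y | y. y \<in> K}"
proof -
  have "bdd_above {dist x y | x y. x \<in> {m} \<and> y \<in> K}" using bdd_pairs[of "{m}" K] assms by simp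
  moreover have "{dist x y | x y. x \<in> {m} \<and> y \<in> K} = {dist m y | y. y \<in> K}" by auto
  ultimately show ?thesis by simp
qed

lemma key:
  fixes H K :: "'a::metric_space set"
  assumes geo: "geodesic_space TYPE('a)" and uc: "uniformly_convex TYPE('a)"
    and cv: "gconvex H" and K: "K \<noteq> {}" and x: "x \<in> H" and y: "y \<in> H" and xy: "x \<noteq> y"
    and D: "D > 0" and bd: "\<forall>u\<in>H. \<forall>z\<in>K. dist u z \<le> D"
  shows "\<exists>m\<in>H. Sup {dist m z | z. z \<in> K} < D"
proof -
  obtain S where S: "geodesic_segment x y S" using geo unfolding geodesic_space_def by blast
  then obtain g where g: "g 0 = x" "g (dist x y) = y"
    "\<forall>s\<in>{0..dist x y}. \<forall>t\<in>{0..dist x y}. dist (g s) (g t) = \<bar>s - t\<bar>" "S = g ` {0..dist x y}"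
    unfolding geodesic_segment_def by blast
  define m where "m = g (dist x y / 2)"
  have mS: "m \<in> S" using g(4) unfolding m_def by auto
  have mH: "m \<in> H" using cv x y S mS unfolding gconvex_def by blast
  have "dist x m = \<bar>0 - dist x y / 2\<bar>" using g(3)[rule_format, of 0 "dist x y / 2"] g(1) unfolding m_def by simp
  hence dm1: "dist x m = dist x y / 2" by simp
  have "dist m y = \<bar>dist x y / 2 - dist x y\<bar>" using g(3)[rule_format, of "dist x y / 2" "dist x y"] g(2) unfolding m_def by simp
  hence dm2: "dist m y = dist x y / 2" by simp
  have mid: "is_midpoint x y m" unfolding is_midpoint_def using dm1 dm2 by simp
  define \<epsilon> where "\<epsilon> = min (dist x y / D) 2"
  have ep: "0 < \<epsilon>" "\<epsilon> \<le> 2" using xy D unfolding \<epsilon>_def by auto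
  have epD: "dist x y \<ge> \<epsilon> * D"
  proof -
    have "\<epsilon> * D \<le> (dist x y / D) * D" unfolding \<epsilon>_def using D by (intro mult_right_mono) auto
    thus ?thesis using D by simp
  qed
  obtain \<delta> where dl: "0 < \<delta>" "\<delta> \<le> 1" and
    H: "\<forall>a x y m :: 'a. dist x a \<le> D \<and> dist y a \<le> D \<and> dist x y \<ge> \<epsilon> * D
               \<and> is_midpoint x y m \<longrightarrow> dist m a \<le> (1 - \<delta>) * D"
    using uc D ep unfolding uniformly_convex_def by blast
  have "dist m z \<le> (1 - \<delta>) * D" if "z \<in> K" for z
    using H[rule_format, of x z y m] bd x y that epD mid by auto
  hence "Sup {dist m z | z. z \<in> K} \<le> (1 - \<delta>) * D"
    using K by (intro cSup_least) auto
  also have "\<dots> < D" using dl D by simp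
  finally show ?thesis using mH by blast
qed

lemma nonsingle:
  fixes H1 H2 :: "'a::metric_space set"
  assumes ne: "H1 \<noteq> {}" "H2 \<noteq> {}"
    and prox: "proximal_pair H1 H2" and gt: "diam_sets H1 H2 > dist_set H1 H2"
  shows "\<exists>x\<in>H1. \<exists>y\<in>H1. x \<noteq> y" "\<exists>x\<in>H2. \<exists>y\<in>H2. x \<noteq> y"
proof -
  show "\<exists>x\<in>H1. \<exists>y\<in>H1. x \<noteq> y"
  proof (rule ccontr)
    assume "\<not> ?thesis"
    then obtain a where a: "H1 = {a}" using ne(1) by blast
    have "{dist x y | x y. x \<in> H1 \<and> y \<in> H2} = {dist_set H1 H2}"
    proof -
      have "dist a b = dist_set H1 H2" if "b \<in> H2" for b
        using prox that a unfolding proximal_pair_def by auto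
      moreover obtain b0 where "b0 \<in> H2" using ne(2) by blast
      ultimately show ?thesis using a
      proof -
        assume 1: "\<And>b. b \<in> H2 \<Longrightarrow> dist a b = dist_set H1 H2" and 2: "b0 \<in> H2" and 3: "H1 = {a}"
        have "dist a b0 \<in> {dist x y | x y. x \<in> H1 \<and> y \<in> H2}"
          using 2 3 by blast
        hence "dist_set H1 H2 \<in> {dist x y | x y. x \<in> H1 \<and> y \<in> H2}"
          using 1[OF 2] by simp
        thus ?thesis using 1 3 by auto
      qed
    qed
    thus False using gt unfolding diam_sets_def by simp
  qed
  show "\<exists>x\<in>H2. \<exists>y\<in>H2. x \<noteq> y"
  proof (rule ccontr)
    assume "\<not> ?thesis"
    then obtain b where b: "H2 = {b}" using ne(2) by blast
    have "{dist x y | x y. x \<in> H1 \<and> y \<in> H2} = {dist_set H1 H2}"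
    proof -
      have "dist a b = dist_set H1 H2" if "a \<in> H1" for a
        using prox that b unfolding proximal_pair_def by auto
      moreover obtain a0 where "a0 \<in> H1" using ne(1) by blast
      ultimately show ?thesis using b
      proof -
        assume 1: "\<And>a. a \<in> H1 \<Longrightarrow> dist a b = dist_set H1 H2" and 2: "a0 \<in> H1" and 3: "H2 = {b}"
        have "dist a0 b \<in> {dist x y | x y. x \<in> H1 \<and> y \<in> H2}"
          using 2 3 by blast
        hence "dist_set H1 H2 \<in> {dist x y | x y. x \<in> H1 \<and> y \<in> H2}"
          using 1[OF 2] by simp
        thus ?thesis using 1 3 by auto
      qed
    qed
    thus False using gt unfolding diam_sets_def by simp
  qed
qed

theorem mainTheorem4:
  fixes A B :: "'a::metric_space set"
  assumes "geodesic_space TYPE('a)"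
    and "uniformly_convex TYPE('a)"
    and "closed A" and "closed B" and "gconvex A" and "gconvex B"
  shows "proximal_normal_structure A B"
  unfolding proximal_normal_structure_def
proof (intro allI impI)
  fix H1 H2 :: "'a set"
  assume h: "H1 \<noteq> {} \<and> H2 \<noteq> {} \<and> closed H1 \<and> closed H2 \<and> bounded H1 \<and> bounded H2
        \<and> gconvex H1 \<and> gconvex H2 \<and> proximal_pair H1 H2
        \<and> H1 \<subseteq> A \<and> H2 \<subseteq> B \<and> dist_set H1 H2 = dist_set A B
        \<and> diam_sets H1 H2 > dist_set H1 H2"
  define D where "D = diam_sets H1 H2"
  have dpos: "dist_set H1 H2 \<ge> 0"
    unfolding dist_set_def using h by (intro cInf_greatest) auto
  have D0: "D > 0" using h dpos unfolding D_def by linarith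
  have bd: "\<forall>u\<in>H1. \<forall>z\<in>H2. dist u z \<le> D"
    unfolding D_def diam_sets_def using bdd_pairs[of H1 H2] h by (auto intro!: cSup_upper)
  have bd2: "\<forall>u\<in>H2. \<forall>z\<in>H1. dist u z \<le> D" using bd by (metis dist_commute)
  obtain x y where xy: "x \<in> H1" "y \<in> H1" "x \<noteq> y" using nonsingle(1)[of H1 H2] h by blast
  obtain x' y' where xy': "x' \<in> H2" "y' \<in> H2" "x' \<noteq> y'" using nonsingle(2)[of H1 H2] h by blast
  obtain m1 where m1: "m1 \<in> H1" "Sup {dist m1 z | z. z \<in> H2} < D"
    using key[OF assms(1,2), of H1 H2 x y D] h xy D0 bd by blast
  obtain m2 where m2: "m2 \<in> H2" "Sup {dist m2 z | z. z \<in> H1} < D"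
    using key[OF assms(1,2), of H2 H1 x' y' D] h xy' D0 bd2 by blast
  show "\<exists>x1\<in>H1. \<exists>x2\<in>H2. diam_pt x1 H2 < diam_sets H1 H2 \<and> diam_pt x2 H1 < diam_sets H1 H2"
    using m1 m2 unfolding diam_pt_def D_def by blast
qed

end
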